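(* Let $A,B\in\mathrm{SL}_2\mathbb{Z}$ be noncommuting, well oriented, with $2\le\mathrm{tr}(A)<\mathrm{tr}(B)$ and $\mathrm{tr}(AB)>\mathrm{tr}(B^2)$. Then the integers $\mathrm{tr}((AB)^3)$ and $\mathrm{tr}((AB^2)^2)$ differ by at least $2$.
   Context: Fixed points are for the Möbius action on $\partial\mathcal{H}=\mathbb{P}^1\mathbb{R}$; $\alpha^\pm$ ($\beta^\pm$) are the attracting/repelling fixed points of $A$ ($B$), both equal to the unique fixed point if parabolic. With $\partial\mathcal{H}$ cyclically ordered and $[\alpha,\beta]$ the closed counterclockwise interval from $\alpha$ to $\beta$, let $I^+=\{\alpha^+\}$ if $\alpha^+=\beta^+$, and otherwise the one of $[\alpha^+,\beta^+],[\beta^+,\alpha^+]$ mapped into itself by both $A$ and $B$ (if it exists); define $I^-$ likewise with $A^{-1},B^{-1},\alpha^-,\beta^-$. The pair is coherently oriented if both exist, and well oriented if $A,B$ is coherently oriented but $A,B^{-1}$ is not. *)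

theory Defs
  imports "HOL-Analysis.Analysis"
begin

text \<open>Points of the circle at infinity P^1(R) = R \<union> {\<infinity>}: Some x is the real
  point x, None is \<infinity>.\<close>
type_synonym pt = "real option"

definition rmat :: "int^2^2 \<Rightarrow> real^2^2" where
  "rmat A = (\<chi> i j. real_of_int (A$i$j))"

definition mob :: "real^2^2 \<Rightarrow> pt \<Rightarrow> pt" where
  "mob M p = (case p of
      Some x \<Rightarrow> (if M$2$1 * x + M$2$2 = 0 then None
                 else Some ((M$1$1 * x + M$1$2) / (M$2$1 * x + M$2$2)))
    | None \<Rightarrow> (if M$2$1 = 0 then None else Some (M$1$1 / M$2$1)))"

definition pvec :: "pt \<Rightarrow> real^2" where
  "pvec p = (case p of Some x \<Rightarrow> vector [x, 1] | None \<Rightarrow> vector [1, 0])"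

text \<open>Attracting fixed point: fixed point whose eigenvalue (multiplier of the line)
  has absolute value \<ge> 1 (for det 1: the eigenvalue \<lambda> > 1 in the hyperbolic case,
  the unique fixed point in the parabolic case).\<close>
definition attracting_fp :: "real^2^2 \<Rightarrow> pt" where
  "attracting_fp M = (THE p. mob M p = p \<and>
      (\<exists>l. \<bar>l\<bar> \<ge> 1 \<and> M *v pvec p = l *s pvec p))"

definition repelling_fp :: "real^2^2 \<Rightarrow> pt" where
  "repelling_fp M = (THE p. mob M p = p \<and>
      (\<exists>l. \<bar>l\<bar> \<le> 1 \<and> M *v pvec p = l *s pvec p))"

text \<open>Going up in this order and wrapping from \<infinity> back to -\<infinity> is the
  counterclockwise direction on \<partial>H.\<close>
definition pt_le :: "pt \<Rightarrow> pt \<Rightarrow> bool" where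
  "pt_le p q = (case (p, q) of
      (_, None) \<Rightarrow> True
    | (None, Some _) \<Rightarrow> False
    | (Some x, Some y) \<Rightarrow> x \<le> y)"

definition ccw_interval :: "pt \<Rightarrow> pt \<Rightarrow> pt set" where
  "ccw_interval a b = (if pt_le a b then {x. pt_le a x \<and> pt_le x b}
                        else {x. pt_le a x \<or> pt_le x b})"

definition invariant_under :: "real^2^2 \<Rightarrow> pt set \<Rightarrow> bool" where
  "invariant_under M I \<longleftrightarrow> mob M ` I \<subseteq> I"

definition I_plus_exists :: "real^2^2 \<Rightarrow> real^2^2 \<Rightarrow> bool" where
  "I_plus_exists A B \<longleftrightarrow>
     (let a = attracting_fp A; b = attracting_fp B in
      a = b \<or> (\<exists>I \<in> {ccw_interval a b, ccw_interval b a}.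
                  invariant_under A I \<and> invariant_under B I))"

definition I_minus_exists :: "real^2^2 \<Rightarrow> real^2^2 \<Rightarrow> bool" where
  "I_minus_exists A B \<longleftrightarrow>
     (let a = repelling_fp A; b = repelling_fp B in
      a = b \<or> (\<exists>I \<in> {ccw_interval a b, ccw_interval b a}.
                  invariant_under (matrix_inv A) I \<and> invariant_under (matrix_inv B) I))"

definition coherently_oriented :: "real^2^2 \<Rightarrow> real^2^2 \<Rightarrow> bool" where
  "coherently_oriented A B \<longleftrightarrow> I_plus_exists A B \<and> I_minus_exists A B"

definition well_oriented :: "real^2^2 \<Rightarrow> real^2^2 \<Rightarrow> bool" where
  "well_oriented A B \<longleftrightarrow> coherently_oriented A B \<and> \<not> coherently_oriented A (matrix_inv B)"

end

theory Submission
  imports Defs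
begin

lemma tr2: "trace (M::int^2^2) = M$1$1 + M$2$2"
  by (simp add: trace_def sum_2)

lemma tr_cube:
  fixes M :: "int^2^2" assumes "det M = 1"
  shows "trace (M ** M ** M) = trace M ^ 3 - 3 * trace M"
  using assms by (simp add: tr2 det_2 matrix_matrix_mult_def sum_2 power3_eq_cube) algebra

lemma tr_sq:
  fixes M :: "int^2^2" assumes "det M = 1"
  shows "trace (M ** M) = trace M ^ 2 - 2"
  using assms by (simp add: tr2 det_2 matrix_matrix_mult_def sum_2 power2_eq_square) algebra

lemma tr_xyy:
  fixes X Y :: "int^2^2" assumes "det Y = 1"
  shows "trace (X ** Y ** Y) = trace Y * trace (X ** Y) - trace X"
  using assms by (simp add: tr2 det_2 matrix_matrix_mult_def sum_2) algebra

lemma arith: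
  fixes a b c :: int
  assumes "2 \<le> a" "a < b" "c > b^2 - 2"
  shows "\<bar>(c^3 - 3*c) - ((b*c - a)^2 - 2)\<bar> \<ge> 2"
proof -
  define D where "D = (c^3 - 3*c) - ((b*c - a)^2 - 2)"
  have b3: "b \<ge> 3" using assms by simp
  have a2: "a^2 < b^2" using assms by (simp add: power_strict_mono)
  have b9: "b^2 \<ge> 9" using b3 power_mono[of 3 b 2] by simp
  have "\<bar>D\<bar> \<ge> 2"
  proof (cases "c \<ge> b^2")
    case True
    define k where "k = c - b^2"
    have k: "c = b^2 + k" "k \<ge> 0" using True k_def by simp_all
    have DK: "D = c^2 * k + c*(2*a*b - 3) + 2 - a^2" unfolding D_def k(1) by algebra
    moreover have "c^2 * k \<ge> 0" using k by simp
    moreover have "2*a*b - 3 \<ge> 1"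
    proof -
      have "a*b \<ge> 2*3" using assms b3 mult_mono[of 2 a 3 b] by simp
      then show ?thesis by simp
    qed
    moreover have "c \<ge> b^2" using True .
    ultimately have m1: "c * 1 \<le> c * (2*a*b - 3)" using b9 by (intro mult_left_mono) simp_all
    have "D \<ge> c + 2 - a^2" using m1 DK \<open>c^2 * k \<ge> 0\<close> by simp
    then show "\<bar>D\<bar> \<ge> 2" using a2 True by simp
  next
    case False
    then have c: "c = b^2 - 1" using assms by simp
    define m where "m = 2*a*b - b^2 - 2"
    have DD: "D = c * m + 2 - a^2" unfolding D_def m_def c by algebra
    have c8: "c \<ge> 8" using b9 c by simp
    consider "m = 0" | "m = 1" | "m = -1" | "m \<ge> 2" | "m \<le> -2" by linarith
    then show "\<bar>D\<bar> \<ge> 2"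
    proof cases
      case 1 
      have "a^2 \<ge> 4" using assms power_mono[of 2 a 2] by simp
      then show "\<bar>D\<bar> \<ge> 2" using 1 DD by simp
    next
      case 2 then show "\<bar>D\<bar> \<ge> 2" using DD a2 c by simp
    next
      case 3
      have "a^2 \<ge> 0" by simp
      moreover have "D = 2 - c - a^2" using 3 DD by simp
      ultimately have "D \<le> -2" using c8 by linarith
      then show "\<bar>D\<bar> \<ge> 2" by simp
    next
      case 4
      have "c * m \<ge> c * 2" using 4 c8 by (simp add: mult_left_mono)
      then have "D \<ge> 2" using DD c a2 b9 by linarith
      then show "\<bar>D\<bar> \<ge> 2" by simp
    next
      case 5
      have "c * m \<le> c * (-2)" using 5 c8 by (intro mult_left_mono) simp_all
      moreover have "a^2 \<ge> 0" by simp
      ultimately have "D \<le> -2" using DD c8 by linarith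
      then show "\<bar>D\<bar> \<ge> 2" by simp
    qed
  qed
  then show ?thesis unfolding D_def .
qed

theorem lemma7p1:
  fixes A B :: "int^2^2"
  assumes "det A = 1" and "det B = 1"
    and "A ** B \<noteq> B ** A"
    and "well_oriented (rmat A) (rmat B)"
    and "2 \<le> trace A" and "trace A < trace B"
    and "trace (A ** B) > trace (B ** B)"
  shows "\<bar>trace (A ** B ** A ** B ** A ** B) - trace (A ** B ** B ** A ** B ** B)\<bar> \<ge> 2"
proof -
  have dAB: "det (A ** B) = 1" using assms by (simp add: det_mul)
  have dABB: "det (A ** B ** B) = 1" using assms by (simp add: det_mul)
  have e1: "A ** B ** A ** B ** A ** B = (A ** B) ** (A ** B) ** (A ** B)"
    by (simp add: matrix_mul_assoc)
  have e2: "A ** B ** B ** A ** B ** B = (A ** B ** B) ** (A ** B ** B)"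
    by (simp add: matrix_mul_assoc)
  have t1: "trace (A ** B ** A ** B ** A ** B) = trace (A ** B) ^ 3 - 3 * trace (A ** B)"
    unfolding e1 by (rule tr_cube[OF dAB])
  have t2: "trace (A ** B ** B ** A ** B ** B) = (trace B * trace (A ** B) - trace A) ^ 2 - 2"
    unfolding e2 tr_sq[OF dABB] tr_xyy[OF assms(2)] ..
  have t3: "trace (B ** B) = trace B ^ 2 - 2" by (rule tr_sq[OF assms(2)])
  show ?thesis unfolding t1 t2
    using arith[of "trace A" "trace B" "trace (A ** B)"] assms(5,6,7) t3 by simp
qed

end
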